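(* In the basic Fraenkel model $\mathcal V_{F_0}$, with $A$ its set of atoms, there is no injection from $\mathrm{seq}^{1-1}(A)$ into $\mathrm{Part}_{\mathrm{fin}}(A)$. Consequently (via the Jech–Sochor embedding theorem) it is consistent with ZF that there is an infinite set $X$ with $|\mathrm{seq}^{1-1}(X)|\not\le|\mathrm{Part}_{\mathrm{fin}}(X)|$, so the Dedekind-infiniteness hypothesis in "$|\mathrm{seq}(X)|<|\mathrm{Part}_{\mathrm{fin}}(X)|$ for Dedekind infinite $X$" cannot be removed.
   Context: ZFA is Zermelo–Fraenkel set theory with atoms. The basic Fraenkel model $\mathcal V_{F_0}$ is the permutation model obtained from a denumerable set $A$ of atoms, the group $\mathcal G$ of all permutations of $A$, and the normal ideal of finite subsets of $A$: a finite $E\subseteq A$ is a support of $x$ if every $\pi\in\mathcal G$ fixing $E$ pointwise satisfies $\pi x=x$, and $\mathcal V_{F_0}$ consists of the sets $x$ that have a finite support and all of whose elements are in $\mathcal V_{F_0}$ (hereditarily). $\mathrm{seq}^{1-1}(A)$ is the set of injective finite sequences of elements of $A$; $\mathrm{Part}_{\mathrm{fin}}(A)$ is the set of partitions of $A$ all of whose blocks are finite. *)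

theory Defs
  imports Main
begin

text \<open>Atoms of the basic Fraenkel model: a denumerable set, represented by the type nat.
  The group G is the group of all permutations (bijections) of the atoms; supports are finite sets.\<close>

definition is_partition :: "'a set \<Rightarrow> 'a set set \<Rightarrow> bool" where
  "is_partition X P \<longleftrightarrow> (\<forall>B\<in>P. B \<noteq> {}) \<and> \<Union>P = X \<and>
     (\<forall>B\<in>P. \<forall>C\<in>P. B \<noteq> C \<longrightarrow> B \<inter> C = {})"

definition Part_fin :: "'a set \<Rightarrow> 'a set set set" where
  "Part_fin X = {P. is_partition X P \<and> (\<forall>B\<in>P. finite B)}"

definition seq_inj :: "'a set \<Rightarrow> 'a list set" where
  "seq_inj X = {s. distinct s \<and> set s \<subseteq> X}"

definition fixing_perm :: "'a set \<Rightarrow> ('a \<Rightarrow> 'a) \<Rightarrow> bool" where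
  "fixing_perm E \<pi> \<longleftrightarrow> bij \<pi> \<and> (\<forall>a\<in>E. \<pi> a = a)"

text \<open>A function f : seq^{1-1}(A) -> Part_fin(A) lies in the basic Fraenkel model iff it has a
  finite support E, i.e. every permutation fixing E pointwise commutes with f
  (pi(f) = f, where pi acts on sequences entrywise and on partitions blockwise).\<close>
definition fm_supports :: "nat set \<Rightarrow> (nat list \<Rightarrow> nat set set) \<Rightarrow> bool" where
  "fm_supports E f \<longleftrightarrow> (\<forall>\<pi>. fixing_perm E \<pi> \<longrightarrow>
      (\<forall>s\<in>seq_inj UNIV. f (map \<pi> s) = (\<lambda>B. \<pi> ` B) ` f s))"

end

theory Submission
  imports Defs
begin

definition tr :: "nat \<Rightarrow> nat \<Rightarrow> nat \<Rightarrow> nat" where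
  "tr a b x = (if x = a then b else if x = b then a else x)"

lemma tr_tr: "tr a b (tr a b x) = x"
  by (simp add: tr_def)

lemma bij_tr: "bij (tr a b)"
  by (metis bijI' tr_tr)

lemma tr_img_img: "tr a b ` (tr a b ` C) = C"
  by (simp add: image_image tr_tr)

lemma fix_from_closed:
  assumes "\<forall>C\<in>P. tr a b ` C \<in> P"
  shows "(\<lambda>C. tr a b ` C) ` P = P"
proof
  show "(\<lambda>C. tr a b ` C) ` P \<subseteq> P" using assms by auto
  show "P \<subseteq> (\<lambda>C. tr a b ` C) ` P"
  proof
    fix C assume "C \<in> P"
    hence "tr a b ` C \<in> P" using assms by auto
    moreover have "C = tr a b ` (tr a b ` C)" by (simp add: tr_img_img)
    ultimately show "C \<in> (\<lambda>C. tr a b ` C) ` P" by blast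
  qed
qed

lemma part_same:
  assumes "is_partition X P" "B \<in> P" "C \<in> P" "x \<in> B" "x \<in> C"
  shows "B = C"
  using assms unfolding is_partition_def by blast

lemma singleton_outside:
  assumes P: "is_partition UNIV P" and fin: "\<forall>B\<in>P. finite B" and F: "finite F"
    and fx: "\<forall>c d. c \<notin> F \<longrightarrow> d \<notin> F \<longrightarrow> (\<lambda>C. tr c d ` C) ` P = P"
    and B: "B \<in> P" and c: "c \<in> B" "c \<notin> F"
  shows "B = {c}"
proof (rule ccontr)
  assume "B \<noteq> {c}"
  then obtain e where e: "e \<in> B" "e \<noteq> c" using c by blast
  have "finite (F \<union> B)" using F fin B by auto
  then obtain d where d: "d \<notin> F \<union> B"
    by (metis ex_new_if_finite infinite_UNIV_nat)
  have "tr c d ` B \<in> P" using fx[rule_format, of c d] c d B by blast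
  moreover have "d \<in> tr c d ` B" using c by (force simp: tr_def)
  moreover have "e \<in> tr c d ` B"
    using e d by (force simp: tr_def intro: image_eqI[of e _ e])
  ultimately have "tr c d ` B = B" using part_same[OF P _ B] e by blast
  thus False using d \<open>d \<in> tr c d ` B\<close> by auto
qed

lemma main_lemma:
  assumes P: "is_partition UNIV P" and fin: "\<forall>B\<in>P. finite B" and E: "finite E"
    and S: "finite S" "S \<inter> E = {}" "card S > 2 ^ card E"
    and fx: "\<forall>c d. c \<notin> E \<union> S \<longrightarrow> d \<notin> E \<union> S \<longrightarrow> (\<lambda>C. tr c d ` C) ` P = P"
  shows "\<exists>a b. a \<in> S \<and> b \<in> S \<and> a \<noteq> b \<and> (\<lambda>C. tr a b ` C) ` P = P"
proof -
  have ex: "\<And>x. \<exists>B\<in>P. x \<in> B" using P unfolding is_partition_def by blast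
  have FF: "finite (E \<union> S)" using E S by auto
  show ?thesis
  proof (cases "\<exists>a\<in>S. \<exists>b\<in>S. a \<noteq> b \<and> (\<exists>B\<in>P. a \<in> B \<and> b \<in> B)")
    case True
    then obtain a b B where ab: "a \<in> S" "b \<in> S" "a \<noteq> b" "B \<in> P" "a \<in> B" "b \<in> B" by blast
    have "\<forall>C\<in>P. tr a b ` C \<in> P"
    proof
      fix C assume C: "C \<in> P"
      show "tr a b ` C \<in> P"
      proof (cases "C = B")
        case True
        have "tr a b ` B \<subseteq> B" using ab by (auto simp: tr_def)
        moreover have "B \<subseteq> tr a b ` B"
        proof
          fix x assume "x \<in> B"
          hence "tr a b x \<in> B" using ab by (auto simp: tr_def)
          thus "x \<in> tr a b ` B" by (metis image_eqI tr_tr)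
        qed
        ultimately show ?thesis using True C by auto
      next
        case False
        hence "a \<notin> C" "b \<notin> C" using part_same[OF P C ab(4)] ab by auto
        hence "tr a b ` C = C" by (auto simp: tr_def)
        thus ?thesis using C by simp
      qed
    qed
    hence "(\<lambda>C. tr a b ` C) ` P = P" by (rule fix_from_closed)
    thus ?thesis using ab(1-3) by blast
  next
    case nc: False
    define blk where "blk x = (SOME B. B \<in> P \<and> x \<in> B)" for x
    have blk: "blk x \<in> P \<and> x \<in> blk x" for x
    proof -
      have "\<exists>B. B \<in> P \<and> x \<in> B" using ex[of x] by blast
      thus ?thesis unfolding blk_def by (rule someI_ex)
    qed
    define h where "h x = blk x \<inter> E" for x
    have "\<not> inj_on h S"
    proof
      assume inj: "inj_on h S"
      have "h ` S \<subseteq> Pow E" by (auto simp: h_def)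
      hence "card (h ` S) \<le> card (Pow E)" using E by (simp add: card_mono)
      also have "\<dots> = 2 ^ card E" using E by (simp add: card_Pow)
      finally show False using card_image[OF inj] S by simp
    qed
    then obtain a b where ab: "a \<in> S" "b \<in> S" "a \<noteq> b" "h a = h b"
      unfolding inj_on_def by blast
    have single: "blk x = {x}" if x: "x \<in> S" "h x = {}" for x
    proof -
      have "y = x" if y: "y \<in> blk x" for y
      proof (cases "y \<in> E \<union> S")
        case True
        show ?thesis
        proof (rule ccontr)
          assume "y \<noteq> x"
          moreover have "y \<notin> E" using x y unfolding h_def by auto
          ultimately show False using nc True x blk[of x] y by blast
        qed
      next
        case False
        hence "blk x = {y}" using singleton_outside[OF P fin FF fx] blk[of x] y by blast
        thus ?thesis using blk[of x] by auto
      qed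
      thus ?thesis using blk[of x] by auto
    qed
    have "blk a \<noteq> blk b" using nc ab blk by blast
    hence "blk a \<inter> blk b = {}" using P blk unfolding is_partition_def by blast
    hence "h a = {}" using ab(4) unfolding h_def by auto
    hence ba: "blk a = {a}" "blk b = {b}" using single ab by auto
    have "\<forall>C\<in>P. tr a b ` C \<in> P"
    proof
      fix C assume C: "C \<in> P"
      show "tr a b ` C \<in> P"
      proof (cases "a \<in> C \<or> b \<in> C")
        case True
        then show ?thesis
        proof
          assume "a \<in> C"
          hence "C = blk a" using part_same[OF P C, of "blk a" a] blk[of a] by blast
          hence "C = {a}" using ba by simp
          thus ?thesis using blk[of b] ba by (simp add: tr_def)
        next
          assume "b \<in> C"
          hence "C = blk b" using part_same[OF P C, of "blk b" b] blk[of b] by blast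
          hence "C = {b}" using ba by simp
          thus ?thesis using blk[of a] ba ab by (simp add: tr_def)
        qed
      next
        case False
        hence "tr a b ` C = C" by (auto simp: tr_def)
        thus ?thesis using C by simp
      qed
    qed
    hence "(\<lambda>C. tr a b ` C) ` P = P" by (rule fix_from_closed)
    thus ?thesis using ab(1-3) by blast
  qed
qed

theorem theorem3p1:
  shows "\<not> (\<exists>E f. finite E \<and> fm_supports E f \<and>
            f ` seq_inj (UNIV::nat set) \<subseteq> Part_fin UNIV \<and>
            inj_on f (seq_inj (UNIV::nat set)))"
proof
  assume "\<exists>E f. finite E \<and> fm_supports E f \<and>
            f ` seq_inj (UNIV::nat set) \<subseteq> Part_fin UNIV \<and>
            inj_on f (seq_inj (UNIV::nat set))"
  then obtain E f where E: "finite E" and sup: "fm_supports E f"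
    and img: "f ` seq_inj (UNIV::nat set) \<subseteq> Part_fin UNIV"
    and inj: "inj_on f (seq_inj (UNIV::nat set))" by blast
  have "infinite (UNIV - E)" using E by (simp add: infinite_UNIV_nat)
  then obtain S where S: "S \<subseteq> UNIV - E" "finite S" "card S = 2 ^ card E + 1"
    using infinite_arbitrarily_large by blast
  define s where "s = sorted_list_of_set S"
  have s: "distinct s" "set s = S" using S by (auto simp: s_def)
  hence sin: "s \<in> seq_inj UNIV" by (simp add: seq_inj_def)
  have fp: "fixing_perm E (tr c d)" if "c \<notin> E" "d \<notin> E" for c d
    using that bij_tr by (auto simp: fixing_perm_def tr_def)
  have eq: "f (map (tr c d) s) = (\<lambda>B. tr c d ` B) ` f s" if "c \<notin> E" "d \<notin> E" for c d
    using sup fp[OF that] sin unfolding fm_supports_def by blast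
  have Pf: "f s \<in> Part_fin UNIV" using img sin by blast
  have fx: "\<forall>c d. c \<notin> E \<union> S \<longrightarrow> d \<notin> E \<union> S \<longrightarrow> (\<lambda>C. tr c d ` C) ` f s = f s"
  proof (intro allI impI)
    fix c d assume c: "c \<notin> E \<union> S" and d: "d \<notin> E \<union> S"
    have "map (tr c d) s = s"
      using c d s(2) by (intro map_idI) (auto simp: tr_def)
    thus "(\<lambda>C. tr c d ` C) ` f s = f s" using eq[of c d] c d by simp
  qed
  obtain a b where ab: "a \<in> S" "b \<in> S" "a \<noteq> b" "(\<lambda>C. tr a b ` C) ` f s = f s"
  proof -
    have "is_partition UNIV (f s)" "\<forall>B\<in>f s. finite B" using Pf unfolding Part_fin_def by auto
    moreover have "S \<inter> E = {}" "card S > 2 ^ card E" using S by auto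
    ultimately have "\<exists>a b. a \<in> S \<and> b \<in> S \<and> a \<noteq> b \<and> (\<lambda>C. tr a b ` C) ` f s = f s"
      by (rule main_lemma[OF _ _ E S(2) _ _ fx])
    thus ?thesis using that by metis
  qed
  have aE: "a \<notin> E" "b \<notin> E" using ab S by auto
  have m: "map (tr a b) s \<in> seq_inj UNIV"
    using s bij_is_inj[OF bij_tr[of a b]] by (simp add: seq_inj_def distinct_map inj_on_subset[of _ UNIV])
  have "f (map (tr a b) s) = f s" using eq[OF aE] ab by simp
  hence "map (tr a b) s = s" using inj m sin unfolding inj_on_def by blast
  hence "map (tr a b) s = map id s" by simp
  hence "\<forall>x\<in>set s. tr a b x = id x" by (simp only: map_eq_conv)
  hence "tr a b a = a" using ab(1) s(2) by simp
  thus False using ab by (simp add: tr_def)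
qed

end
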